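(* Let $\mathcal C:m\to l$ and $\mathcal D:l\to n$ be roPGs and $i\in[m]$. Then $[\![\pi^{\mathcal C;\mathcal D}_i]\!]$ equals: $[\![\pi^{\mathcal C}_i]\!]$ if $[\![\pi^{\mathcal C}_i]\!]\in\{\exists^*,\forall^*\}$; $[\![\pi^{\mathcal D}_j]\!]$ if $[\![\pi^{\mathcal C}_i]\!]=j\in[l]$; $[\![\pi^{\mathcal D}_j]\!]$ if $[\![\pi^{\mathcal C}_i]\!]=(r,j)\in\mathbb R\times[l]$ and $[\![\pi^{\mathcal D}_j]\!]\in\{\exists^*,\forall^*\}$; $(r,k)$ if $[\![\pi^{\mathcal C}_i]\!]=(r,j)\in\mathbb R\times[l]$ and $[\![\pi^{\mathcal D}_j]\!]=k\in[n]$; $(r+r',k)$ if $[\![\pi^{\mathcal C}_i]\!]=(r,j)\in\mathbb R\times[l]$ and $[\![\pi^{\mathcal D}_j]\!]=(r',k)\in\mathbb R\times[n]$.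
   Context: Notation: $[k]=\{1,\dots,k\}$; $X+Y$ disjoint union. An roMPG $\mathcal A:m\to n$ is a tuple $(m,n,Q,E,\rho,w)$ with $Q$ a finite set of positions, entrances $[m]$ and exits $[n]$ (pairwise disjoint with $Q$), edges $E\subseteq([m]+Q)\times([n]+Q)$ such that each entrance has exactly one successor and each exit at most one predecessor, roles $\rho:Q\to\{\exists,\forall\}$, weights $w:Q\to\mathbb R$. An roPG is an roMPG in which every element of $[m]+Q$ has at most one successor. For $\mathcal C:m\to l$, $\mathcal D:l\to n$, the sequential composition $\mathcal C;\mathcal D:m\to n$ has positions $Q^{\mathcal C}+Q^{\mathcal D}$ with inherited roles and weights, and edges: the edges of $\mathcal C$ from $[m]+Q^{\mathcal C}$ to $Q^{\mathcal C}$; the edges of $\mathcal D$ from $Q^{\mathcal D}$ to $[n]+Q^{\mathcal D}$; and $(s,s')$ with $s\in[m]+Q^{\mathcal C}$, $s'\in[n]+Q^{\mathcal D}$ whenever some $i\in[l]$ has $(s,i)\in E^{\mathcal C}$ ($i$ as exit of $\mathcal C$) and $(i,s')\in E^{\mathcal D}$ ($i$ as entrance of $\mathcal D$); no other edges. It is again an roPG. For an roPG $\mathcal C:m\to n$ and entrance $i$, $\pi^{\mathcal C}_i=(s_j)_{j\in J}$ ($J=\{0,\dots,M\}$ or $J=\mathbb N$) is the unique sequence with $s_0=i$, $(s_j,s_{j+1})\in E$ whenever $j,j+1\in J$, and $s_M$ without successor if $J$ is finite. An infinite play satisfies the MP condition if $\liminf_{N\to\infty}\frac1N\sum_{j=1}^Nw(s_j)\ge0$.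 With $T(X)=X+\mathbb R\times X+\{\exists^*,\forall^*\}$, the denotation $[\![\pi]\!]\in T([n])$ of a play $\pi=(s_j)_{j\in J}$ is: $s_1$ if $J=\{0,1\}$ and $s_1$ is an exit; $(\sum_{j=1}^{M-1}w(s_j),s_M)$ if $J=\{0,..,M\}$, $M\ge2$, $s_M$ an exit; $\exists^*$ if $J$ is finite and $s_M$ is a position of role $\forall$, or $J$ is infinite and $\pi$ satisfies MP; $\forall^*$ if $J$ is finite and $s_M$ is a position of role $\exists$, or $J$ is infinite and $\pi$ fails MP. *)

theory Defs
  imports Complex_Main "HOL-Library.Extended_Real" "HOL-Library.Liminf_Limsup"
begin

datatype role = RExists | RForall

text \<open>Nodes of a game: entrances [m] (Ent i, 1 \<le> i \<le> m), positions (Pos q, q \<in> Q),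
  exits [n] (Exit k, 1 \<le> k \<le> n).  These three kinds are disjoint by construction.\<close>
datatype 'q node = Ent nat | Pos 'q | Exit nat

record 'q ropmg =
  n_in  :: nat
  n_out :: nat
  posns :: "'q set"
  edges :: "('q node \<times> 'q node) set"
  roles :: "'q \<Rightarrow> role"
  wt    :: "'q \<Rightarrow> real"

definition sources :: "'q ropmg \<Rightarrow> 'q node set" where
  "sources A = Ent ` {1..n_in A} \<union> Pos ` posns A"

definition targets :: "'q ropmg \<Rightarrow> 'q node set" where
  "targets A = Exit ` {1..n_out A} \<union> Pos ` posns A"

definition roMPG :: "'q ropmg \<Rightarrow> nat \<Rightarrow> nat \<Rightarrow> bool" where
  "roMPG A m n \<longleftrightarrow> n_in A = m \<and> n_out A = n \<and> finite (posns A)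
     \<and> edges A \<subseteq> sources A \<times> targets A
     \<and> (\<forall>i\<in>{1..m}. \<exists>!t. (Ent i, t) \<in> edges A)
     \<and> (\<forall>k\<in>{1..n}. \<forall>s s'. (s, Exit k) \<in> edges A \<longrightarrow> (s', Exit k) \<in> edges A \<longrightarrow> s = s')"

definition roPG :: "'q ropmg \<Rightarrow> nat \<Rightarrow> nat \<Rightarrow> bool" where
  "roPG A m n \<longleftrightarrow> roMPG A m n
     \<and> (\<forall>s\<in>sources A. \<forall>t t'. (s, t) \<in> edges A \<longrightarrow> (s, t') \<in> edges A \<longrightarrow> t = t')"

fun inl_src :: "'a node \<Rightarrow> ('a + 'b) node" where
  "inl_src (Ent i) = Ent i"
| "inl_src (Pos q) = Pos (Inl q)"
| "inl_src (Exit k) = Exit k"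

fun inr_tgt :: "'b node \<Rightarrow> ('a + 'b) node" where
  "inr_tgt (Ent i) = Ent i"
| "inr_tgt (Pos q) = Pos (Inr q)"
| "inr_tgt (Exit k) = Exit k"

definition seqc :: "'a ropmg \<Rightarrow> 'b ropmg \<Rightarrow> ('a + 'b) ropmg" where
  "seqc C D = \<lparr> n_in = n_in C, n_out = n_out D,
     posns = Inl ` posns C \<union> Inr ` posns D,
     edges =
       {(inl_src s, Pos (Inl q)) | s q. s \<in> sources C \<and> q \<in> posns C \<and> (s, Pos q) \<in> edges C}
     \<union> {(Pos (Inr q), inr_tgt t) | q t. q \<in> posns D \<and> t \<in> targets D \<and> (Pos q, t) \<in> edges D}
     \<union> {(inl_src s, inr_tgt t) | s t. s \<in> sources C \<and> t \<in> targets D \<and>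
            (\<exists>i\<in>{1..n_out C}. (s, Exit i) \<in> edges C \<and> (Ent i, t) \<in> edges D)},
     roles = case_sum (roles C) (roles D),
     wt = case_sum (wt C) (wt D) \<rparr>"

datatype 'q play = FinPlay "'q node list" | InfPlay "nat \<Rightarrow> 'q node"

definition is_play :: "'q ropmg \<Rightarrow> nat \<Rightarrow> 'q play \<Rightarrow> bool" where
  "is_play A i p \<longleftrightarrow> (case p of
      FinPlay xs \<Rightarrow> xs \<noteq> [] \<and> xs ! 0 = Ent i
         \<and> (\<forall>j. Suc j < length xs \<longrightarrow> (xs ! j, xs ! Suc j) \<in> edges A)
         \<and> (\<nexists>t. (last xs, t) \<in> edges A)
    | InfPlay s \<Rightarrow> s 0 = Ent i \<and> (\<forall>j. (s j, s (Suc j)) \<in> edges A))"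

definition the_play :: "'q ropmg \<Rightarrow> nat \<Rightarrow> 'q play" where
  "the_play A i = (THE p. is_play A i p)"

fun node_wt :: "'q ropmg \<Rightarrow> 'q node \<Rightarrow> real" where
  "node_wt A (Pos q) = wt A q"
| "node_wt A _ = 0"

definition MP_cond :: "'q ropmg \<Rightarrow> (nat \<Rightarrow> 'q node) \<Rightarrow> bool" where
  "MP_cond A s \<longleftrightarrow>
     liminf (\<lambda>N. ereal ((\<Sum>j=1..N. node_wt A (s j)) / real N)) \<ge> 0"

text \<open>T(X) = X + R \<times> X + {\<exists>*, \<forall>*}.\<close>
datatype 'x T = Ret 'x | WRet real 'x | EStar | AStar

definition den :: "'q ropmg \<Rightarrow> 'q play \<Rightarrow> nat T" where
  "den A p = (case p of
      FinPlay xs \<Rightarrow>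
        (let M = length xs - 1 in
         case xs ! M of
           Exit k \<Rightarrow> (if M = 1 then Ret k
                      else WRet (\<Sum>j=1..M-1. node_wt A (xs ! j)) k)
         | Pos q \<Rightarrow> (case roles A q of RForall \<Rightarrow> EStar | RExists \<Rightarrow> AStar)
         | Ent _ \<Rightarrow> undefined)
    | InfPlay s \<Rightarrow> (if MP_cond A s then EStar else AStar))"

definition den_play :: "'q ropmg \<Rightarrow> nat \<Rightarrow> nat T" where
  "den_play A i = den A (the_play A i)"

end

theory Submission
  imports Defs
begin


lemma liminf_transfer:
  fixes f g :: "nat \<Rightarrow> real"
  assumes lim: "(\<lambda>N. f N - g N) \<longlonglongrightarrow> 0"
    and g: "0 \<le> liminf (\<lambda>N. ereal (g N))"
  shows "0 \<le> liminf (\<lambda>N. ereal (f N))"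
  unfolding le_Liminf_iff
proof (intro allI impI)
  fix y :: ereal assume y: "y < 0"
  show "\<forall>\<^sub>F x in sequentially. y < ereal (f x)"
  proof (cases y)
    case (real y')
    with y have y': "y' < 0" by simp
    have "ereal (y'/2) < 0" using y' by simp
    with g have ev1: "\<forall>\<^sub>F x in sequentially. ereal (y'/2) < ereal (g x)"
      unfolding le_Liminf_iff by blast
    have ev2: "\<forall>\<^sub>F x in sequentially. dist (f x - g x) 0 < - y'/2"
      using lim y' unfolding tendsto_iff by simp
    show ?thesis using ev1 ev2
    proof eventually_elim
      case (elim x)
      then show ?case using real by (simp add: dist_real_def abs_less_iff)
    qed
  qed (use y in auto)
qed

lemma sum_shift:
  fixes a b :: "nat \<Rightarrow> real"
  assumes "\<forall>k. 1 \<le> k \<and> k \<le> d \<longrightarrow> a (c + k) = b k"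
  shows "(\<Sum>j=1..c+d. a j) = (\<Sum>j=1..c. a j) + (\<Sum>j=1..d. b j)"
  using assms
proof (induction d)
  case 0 then show ?case by simp
next
  case (Suc d)
  have "(\<Sum>j=1..c+Suc d. a j) = (\<Sum>j=1..c+d. a j) + a (c + Suc d)"
    by (simp add: sum.cl_ivl_Suc)
  also have "\<dots> = (\<Sum>j=1..c. a j) + (\<Sum>j=1..d. b j) + b (Suc d)"
    using Suc.IH Suc.prems Suc.prems[rule_format, of "Suc d"] by simp
  also have "\<dots> = (\<Sum>j=1..c. a j) + (\<Sum>j=1..Suc d. b j)"
    by (simp add: sum.cl_ivl_Suc)
  finally show ?case .
qed

lemma sum_diff_bound:
  fixes b :: "nat \<Rightarrow> real"
  assumes "\<forall>k. \<bar>b k\<bar> \<le> B"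
  shows "\<bar>(\<Sum>j=1..K+d. b j) - (\<Sum>j=1..K. b j)\<bar> \<le> real d * B"
proof (induction d)
  case 0 then show ?case by simp
next
  case (Suc d)
  have "(\<Sum>j=1..K+Suc d. b j) = (\<Sum>j=1..K+d. b j) + b (Suc (K + d))"
    by (simp add: sum.cl_ivl_Suc)
  then show ?case using Suc assms[rule_format, of "Suc (K+d)"] by (simp add: algebra_simps)
qed

lemma mp_shift:
  fixes a b :: "nat \<Rightarrow> real"
  assumes ab: "\<forall>k\<ge>1. a (c+k) = b k" and B: "\<forall>k. \<bar>b k\<bar> \<le> B"
  shows "0 \<le> liminf (\<lambda>N. ereal ((\<Sum>j=1..N. a j)/real N)) \<longleftrightarrow>
         0 \<le> liminf (\<lambda>N. ereal ((\<Sum>j=1..N. b j)/real N))"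
proof -
  define K where "K = \<bar>\<Sum>j=1..c. a j\<bar> + real c * B"
  have bnd: "\<bar>(\<Sum>j=1..N. a j) - (\<Sum>j=1..N. b j)\<bar> \<le> K" if "N \<ge> c" for N
  proof -
    define d where "d = N - c"
    have N: "N = c + d" using that by (simp add: d_def)
    have e1: "(\<Sum>j=1..N. a j) = (\<Sum>j=1..c. a j) + (\<Sum>j=1..d. b j)"
      unfolding N by (rule sum_shift) (use ab in auto)
    have cd: "c + d = d + c" by simp
    have e2: "(\<Sum>j=1..N. b j) = (\<Sum>j=1..d+c. b j)" unfolding N cd ..
    have e3: "\<bar>(\<Sum>j=1..d+c. b j) - (\<Sum>j=1..d. b j)\<bar> \<le> real c * B"
      by (rule sum_diff_bound[OF B])
    have e4: "(\<Sum>j=1..N. a j) - (\<Sum>j=1..N. b j) = (\<Sum>j=1..c. a j) - ((\<Sum>j=1..d+c. b j) - (\<Sum>j=1..d. b j))"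
      using e1 e2 by simp
    have e5: "\<bar>(\<Sum>j=1..c. a j) - ((\<Sum>j=1..d+c. b j) - (\<Sum>j=1..d. b j))\<bar>
       \<le> \<bar>\<Sum>j=1..c. a j\<bar> + \<bar>(\<Sum>j=1..d+c. b j) - (\<Sum>j=1..d. b j)\<bar>"
      by (rule abs_triangle_ineq4)
    show ?thesis unfolding e4 K_def using e3 e5 by linarith
  qed
  have ev: "\<bar>(\<Sum>j=1..N. a j)/real N - (\<Sum>j=1..N. b j)/real N\<bar> \<le> K / real N" if "N \<ge> max c 1" for N
  proof -
    have "(\<Sum>j=1..N. a j)/real N - (\<Sum>j=1..N. b j)/real N = ((\<Sum>j=1..N. a j) - (\<Sum>j=1..N. b j)) / real N"
      by (rule diff_divide_distrib[symmetric])
    moreover have "\<bar>((\<Sum>j=1..N. a j) - (\<Sum>j=1..N. b j)) / real N\<bar> = \<bar>(\<Sum>j=1..N. a j) - (\<Sum>j=1..N. b j)\<bar> / real N"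
      by simp
    moreover have "\<bar>(\<Sum>j=1..N. a j) - (\<Sum>j=1..N. b j)\<bar> / real N \<le> K / real N"
      by (rule divide_right_mono) (use bnd that in auto)
    ultimately show ?thesis by simp
  qed
  have lim: "(\<lambda>N. (\<Sum>j=1..N. a j)/real N - (\<Sum>j=1..N. b j)/real N) \<longlonglongrightarrow> 0"
  proof (rule tendsto_sandwich[of "\<lambda>N. - K / real N" _ _ "\<lambda>N. K / real N"])
    show "\<forall>\<^sub>F N in sequentially. - K / real N \<le> (\<Sum>j=1..N. a j)/real N - (\<Sum>j=1..N. b j)/real N"
      using eventually_ge_at_top[of "max c 1"]
    proof eventually_elim
      case (elim N)
      from ev[OF elim] show ?case unfolding abs_le_iff by linarith
    qed
    show "\<forall>\<^sub>F N in sequentially. (\<Sum>j=1..N. a j)/real N - (\<Sum>j=1..N. b j)/real N \<le> K / real N"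
      using eventually_ge_at_top[of "max c 1"]
    proof eventually_elim
      case (elim N)
      from ev[OF elim] show ?case unfolding abs_le_iff by linarith
    qed
    show "(\<lambda>N. - K / real N) \<longlonglongrightarrow> 0" using lim_const_over_n[of "-K"] by simp
    show "(\<lambda>N. K / real N) \<longlonglongrightarrow> 0" using lim_const_over_n[of "K"] by simp
  qed
  have lim2: "(\<lambda>N. (\<Sum>j=1..N. b j)/real N - (\<Sum>j=1..N. a j)/real N) \<longlonglongrightarrow> 0"
    using tendsto_minus[OF lim] by simp
  show ?thesis using liminf_transfer[OF lim] liminf_transfer[OF lim2] by blast
qed



definition detE :: "('x \<times> 'x) set \<Rightarrow> bool" where
  "detE E \<longleftrightarrow> (\<forall>x t t'. (x,t) \<in> E \<longrightarrow> (x,t') \<in> E \<longrightarrow> t = t')"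

lemma is_play_Fin: "is_play A i (FinPlay xs) \<longleftrightarrow> xs \<noteq> [] \<and> xs ! 0 = Ent i
         \<and> (\<forall>j. Suc j < length xs \<longrightarrow> (xs ! j, xs ! Suc j) \<in> edges A)
         \<and> (\<nexists>t. (last xs, t) \<in> edges A)"
  by (simp add: is_play_def)

lemma is_play_Inf: "is_play A i (InfPlay s) \<longleftrightarrow> s 0 = Ent i \<and> (\<forall>j. (s j, s (Suc j)) \<in> edges A)"
  by (simp add: is_play_def)

lemma play_exists: "\<exists>p. is_play A i p"
proof -
  define nx where "nx x = (SOME t. (x,t) \<in> edges A)" for x
  define w where "w k = (nx ^^ k) (Ent i)" for k
  have wS: "w (Suc k) = nx (w k)" for k by (simp add: w_def)
  show ?thesis
  proof (cases "\<forall>k. \<exists>t. (w k, t) \<in> edges A")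
    case True
    have "is_play A i (InfPlay w)"
      unfolding is_play_Inf
    proof
      show "w 0 = Ent i" by (simp add: w_def)
      show "\<forall>j. (w j, w (Suc j)) \<in> edges A"
        using True unfolding wS nx_def by (metis someI_ex)
    qed
    then show ?thesis by blast
  next
    case False
    define M where "M = (LEAST k. \<not> (\<exists>t. (w k, t) \<in> edges A))"
    have ex: "\<exists>k. \<not> (\<exists>t. (w k, t) \<in> edges A)" using False by blast
    have M1: "\<not> (\<exists>t. (w M, t) \<in> edges A)" using LeastI_ex[OF ex] unfolding M_def .
    have M2: "\<exists>t. (w k, t) \<in> edges A" if "k < M" for k using not_less_Least[OF that[unfolded M_def]] by blast
    have "is_play A i (FinPlay (map w [0..<Suc M]))"
      unfolding is_play_Fin
    proof (intro conjI)
      show "map w [0..<Suc M] \<noteq> []" by simp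
      show "map w [0..<Suc M] ! 0 = Ent i" by (simp del: upt_Suc add: w_def)
      show "\<forall>j. Suc j < length (map w [0..<Suc M]) \<longrightarrow> (map w [0..<Suc M] ! j, map w [0..<Suc M] ! Suc j) \<in> edges A"
      proof (intro allI impI)
        fix j assume "Suc j < length (map w [0..<Suc M])"
        then have j: "j < M" by simp
        then have "(w j, w (Suc j)) \<in> edges A" using M2[OF j] unfolding wS nx_def by (metis someI_ex)
        then show "(map w [0..<Suc M] ! j, map w [0..<Suc M] ! Suc j) \<in> edges A"
          using j by (simp del: upt_Suc add: nth_map_upt)
      qed
      show "\<nexists>t. (last (map w [0..<Suc M]), t) \<in> edges A" using M1 by simp
    qed
    then show ?thesis by blast
  qed
qed

lemma play_unique:
  assumes det: "detE (edges A)" and p: "is_play A i p" and q: "is_play A i p'"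
  shows "p = p'"
proof (cases p)
  case (FinPlay xs) note px = this
  show ?thesis
  proof (cases p')
    case (FinPlay ys)
    have X: "xs \<noteq> []" "xs ! 0 = Ent i" "\<forall>j. Suc j < length xs \<longrightarrow> (xs ! j, xs ! Suc j) \<in> edges A"
         "\<nexists>t. (last xs, t) \<in> edges A" using p px by (simp_all add: is_play_Fin)
    have Y: "ys \<noteq> []" "ys ! 0 = Ent i" "\<forall>j. Suc j < length ys \<longrightarrow> (ys ! j, ys ! Suc j) \<in> edges A"
         "\<nexists>t. (last ys, t) \<in> edges A" using q FinPlay by (simp_all add: is_play_Fin)
    have ag: "j < length xs \<longrightarrow> j < length ys \<longrightarrow> xs ! j = ys ! j" for j
    proof (induction j)
      case 0 then show ?case using X Y by simp
    next
      case (Suc j) then show ?case using X(3) Y(3) det unfolding detE_def by (metis Suc_lessD)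
    qed
    have L1: "\<not> length xs < length ys"
    proof
      assume lt: "length xs < length ys"
      have "last xs = ys ! (length xs - 1)" using ag[of "length xs - 1"] X(1) lt by (simp add: last_conv_nth)
      moreover have "(ys ! (length xs - 1), ys ! Suc (length xs - 1)) \<in> edges A" using Y(3)[rule_format, of "length xs - 1"] X(1) lt by simp
      ultimately show False using X(4) by metis
    qed
    have L2: "\<not> length ys < length xs"
    proof
      assume lt: "length ys < length xs"
      have "last ys = xs ! (length ys - 1)" using ag[of "length ys - 1"] Y(1) lt by (simp add: last_conv_nth)
      moreover have "(xs ! (length ys - 1), xs ! Suc (length ys - 1)) \<in> edges A" using X(3)[rule_format, of "length ys - 1"] Y(1) lt by simp
      ultimately show False using Y(4) by metis
    qed
    have "xs = ys" using L1 L2 ag by (metis nat_neq_iff nth_equalityI)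
    then show ?thesis using px FinPlay by simp
  next
    case (InfPlay s)
    have X: "xs \<noteq> []" "xs ! 0 = Ent i" "\<forall>j. Suc j < length xs \<longrightarrow> (xs ! j, xs ! Suc j) \<in> edges A"
         "\<nexists>t. (last xs, t) \<in> edges A" using p px by (simp_all add: is_play_Fin)
    have Y: "s 0 = Ent i" "\<forall>j. (s j, s (Suc j)) \<in> edges A" using q InfPlay by (simp_all add: is_play_Inf)
    have ag: "j < length xs \<longrightarrow> xs ! j = s j" for j
    proof (induction j)
      case 0 then show ?case using X Y by simp
    next
      case (Suc j) then show ?case using X(3) Y(2) det unfolding detE_def by (metis Suc_lessD)
    qed
    have "last xs = s (length xs - 1)" using ag[of "length xs - 1"] X(1) by (simp add: last_conv_nth)
    then show ?thesis using X(4) Y(2) by metis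
  qed
next
  case (InfPlay s) note ps = this
  have Y: "s 0 = Ent i" "\<forall>j. (s j, s (Suc j)) \<in> edges A" using p ps by (simp_all add: is_play_Inf)
  show ?thesis
  proof (cases p')
    case (FinPlay xs)
    have X: "xs \<noteq> []" "xs ! 0 = Ent i" "\<forall>j. Suc j < length xs \<longrightarrow> (xs ! j, xs ! Suc j) \<in> edges A"
         "\<nexists>t. (last xs, t) \<in> edges A" using q FinPlay by (simp_all add: is_play_Fin)
    have ag: "j < length xs \<longrightarrow> xs ! j = s j" for j
    proof (induction j)
      case 0 then show ?case using X Y by simp
    next
      case (Suc j) then show ?case using X(3) Y(2) det unfolding detE_def by (metis Suc_lessD)
    qed
    have "last xs = s (length xs - 1)" using ag[of "length xs - 1"] X(1) by (simp add: last_conv_nth)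
    then show ?thesis using X(4) Y(2) by metis
  next
    case (InfPlay s')
    have Z: "s' 0 = Ent i" "\<forall>j. (s' j, s' (Suc j)) \<in> edges A" using q InfPlay by (simp_all add: is_play_Inf)
    have "s j = s' j" for j
    proof (induction j)
      case 0 then show ?case using Z Y by simp
    next
      case (Suc j) then show ?case using Z(2) Y(2) det unfolding detE_def by metis
    qed
    then show ?thesis using ps InfPlay by auto
  qed
qed

lemma the_play_eq: "detE (edges A) \<Longrightarrow> is_play A i p \<Longrightarrow> the_play A i = p"
  unfolding the_play_def using play_unique by blast

lemma roPG_det: "roPG A m n \<Longrightarrow> detE (edges A)"
  unfolding roPG_def roMPG_def detE_def by blast

lemma mid_pos: assumes "roMPG A m n" "(x,y) \<in> edges A" "(y,z) \<in> edges A" shows "\<exists>q\<in>posns A. y = Pos q"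
proof -
  have "y \<in> sources A" "y \<in> targets A" using assms unfolding roMPG_def by auto
  then show ?thesis by (auto simp: sources_def targets_def)
qed

lemma tgt_cases: "roMPG A m n \<Longrightarrow> (x,y) \<in> edges A \<Longrightarrow> (\<exists>q\<in>posns A. y = Pos q) \<or> (\<exists>k\<in>{1..n}. y = Exit k)"
  unfolding roMPG_def sources_def targets_def by fastforce

lemma src_of: "roMPG A m n \<Longrightarrow> (x,y) \<in> edges A \<Longrightarrow> x \<in> sources A"
  unfolding roMPG_def by auto

lemma tgt_of: "roMPG A m n \<Longrightarrow> (x,y) \<in> edges A \<Longrightarrow> y \<in> targets A"
  unfolding roMPG_def by auto

lemma ent_succ: "roMPG A m n \<Longrightarrow> i \<in> {1..m} \<Longrightarrow> \<exists>t. (Ent i, t) \<in> edges A"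
  unfolding roMPG_def by blast

lemma inl_src_inj: "inl_src x = inl_src y \<longleftrightarrow> x = y"
  by (cases x; cases y) auto
lemma inr_tgt_inj: "inr_tgt x = inr_tgt y \<longleftrightarrow> x = y"
  by (cases x; cases y) auto
lemma inl_src_Inr[simp]: "inl_src x \<noteq> Pos (Inr q)"
  by (cases x) auto
lemma inl_src_Pos_Inl: "inl_src x = Pos (Inl q) \<longleftrightarrow> x = Pos q"
  by (cases x) auto
lemma inl_src_Exit: "inl_src x = Exit k \<longleftrightarrow> x = Exit k"
  by (cases x) auto
lemma inl_src_Inr'[simp]: "Pos (Inr q) \<noteq> inl_src x"
  by (cases x) auto
lemma inl_src_Pos_Inl': "Pos (Inl q) = inl_src x \<longleftrightarrow> x = Pos q"
  by (cases x) auto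
lemma inl_src_Exit': "Exit k = inl_src x \<longleftrightarrow> x = Exit k"
  by (cases x) auto
lemma inr_tgt_Exit': "Exit k = inr_tgt x \<longleftrightarrow> x = Exit k"
  by (cases x) auto

lemma seqc_simps[simp]: "n_in (seqc C D) = n_in C" "n_out (seqc C D) = n_out D"
  "roles (seqc C D) = case_sum (roles C) (roles D)" "wt (seqc C D) = case_sum (wt C) (wt D)"
  by (simp_all add: seqc_def)

lemma node_wt_inl[simp]: "node_wt (seqc C D) (inl_src x) = node_wt C x"
  by (cases x) auto
lemma node_wt_inr[simp]: "node_wt (seqc C D) (inr_tgt x) = node_wt D x"
  by (cases x) auto

lemma E1: "s \<in> sources C \<Longrightarrow> q \<in> posns C \<Longrightarrow> (s, Pos q) \<in> edges C \<Longrightarrow> (inl_src s, Pos (Inl q)) \<in> edges (seqc C D)"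
  unfolding seqc_def by auto
lemma E2: "q \<in> posns D \<Longrightarrow> t \<in> targets D \<Longrightarrow> (Pos q, t) \<in> edges D \<Longrightarrow> (Pos (Inr q), inr_tgt t) \<in> edges (seqc C D)"
  unfolding seqc_def by auto
lemma E3: "s \<in> sources C \<Longrightarrow> t \<in> targets D \<Longrightarrow> j \<in> {1..n_out C} \<Longrightarrow> (s, Exit j) \<in> edges C \<Longrightarrow> (Ent j, t) \<in> edges D
   \<Longrightarrow> (inl_src s, inr_tgt t) \<in> edges (seqc C D)"
  unfolding seqc_def by auto

lemma NS1: "(Pos (Inl q), t) \<in> edges (seqc C D) \<Longrightarrow> \<exists>t'. (Pos q, t') \<in> edges C"
  unfolding seqc_def by (auto simp: inl_src_Pos_Inl inl_src_Pos_Inl')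
lemma NS2: "(Pos (Inr q), t) \<in> edges (seqc C D) \<Longrightarrow> \<exists>t'. (Pos q, t') \<in> edges D"
  unfolding seqc_def by auto
lemma NS3: "(Exit k, t) \<notin> edges (seqc C D)"
  unfolding seqc_def sources_def by (auto simp: inl_src_Exit inl_src_Exit')

lemma seqc_edgeE:
  assumes "(x,t) \<in> edges (seqc C D)"
  shows "(\<exists>s q. x = inl_src s \<and> t = Pos (Inl q) \<and> (s, Pos q) \<in> edges C)
    \<or> (\<exists>q u. x = Pos (Inr q) \<and> t = inr_tgt u \<and> (Pos q, u) \<in> edges D)
    \<or> (\<exists>s u j. x = inl_src s \<and> t = inr_tgt u \<and> (s, Exit j) \<in> edges C \<and> (Ent j, u) \<in> edges D)"
  using assms unfolding seqc_def by auto

lemma seqc_det: assumes "roPG C m l" "roPG D l n" shows "detE (edges (seqc C D))"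
proof -
  have dC: "detE (edges C)" and dD: "detE (edges D)" using assms roPG_det by blast+
  show ?thesis
    unfolding detE_def
  proof (intro allI impI)
    fix x t t' assume a: "(x,t) \<in> edges (seqc C D)" "(x,t') \<in> edges (seqc C D)"
    from seqc_edgeE[OF a(1)] seqc_edgeE[OF a(2)] show "t = t'" using dC dD unfolding detE_def
      by (elim disjE exE conjE) (simp_all add: inl_src_inj, (metis node.distinct node.inject)+)
  qed
qed



lemma den_Fin_Exit: "xs \<noteq> [] \<Longrightarrow> last xs = Exit k \<Longrightarrow> den A (FinPlay xs) =
   (if length xs - 1 = 1 then Ret k else WRet (\<Sum>j=1..length xs - 1 - 1. node_wt A (xs!j)) k)"
  by (simp add: den_def Let_def last_conv_nth)

lemma den_Fin_Pos: "xs \<noteq> [] \<Longrightarrow> last xs = Pos q \<Longrightarrow> den A (FinPlay xs) =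
   (case roles A q of RForall \<Rightarrow> EStar | RExists \<Rightarrow> AStar)"
  by (simp add: den_def Let_def last_conv_nth)

lemma den_Inf: "den A (InfPlay s) = (if MP_cond A s then EStar else AStar)"
  by (simp add: den_def)

definition comb :: "nat T \<Rightarrow> (nat \<Rightarrow> nat T) \<Rightarrow> nat T" where
  "comb a f = (case a of
       EStar \<Rightarrow> EStar
     | AStar \<Rightarrow> AStar
     | Ret j \<Rightarrow> f j
     | WRet r j \<Rightarrow>
         (case f j of
            EStar \<Rightarrow> EStar
          | AStar \<Rightarrow> AStar
          | Ret k \<Rightarrow> WRet r k
          | WRet r' k \<Rightarrow> WRet (r + r') k))"

lemma main:
  fixes C :: "'a ropmg" and D :: "'b ropmg" and m l n i :: nat
  assumes rC: "roPG C m l" and rD: "roPG D l n" and i: "i \<in> {1..m}"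
  shows "den_play (seqc C D) i = comb (den_play C i) (den_play D)"
proof -
  have mC: "roMPG C m l" and mD: "roMPG D l n" using rC rD unfolding roPG_def by auto
  have nC: "n_in C = m" "n_out C = l" and nD: "n_in D = l" "n_out D = n"
    using mC mD unfolding roMPG_def by auto
  have dC: "detE (edges C)" using rC by (rule roPG_det)
  have dD: "detE (edges D)" using rD by (rule roPG_det)
  have dS: "detE (edges (seqc C D))" using seqc_det[OF rC rD] .
  obtain pC where pC: "is_play C i pC" using play_exists by blast
  have dpC: "den_play C i = den C pC" unfolding den_play_def using the_play_eq[OF dC pC] by simp
  have suff: "den_play (seqc C D) i = comb (den_play C i) (den_play D)"
    if "is_play (seqc C D) i p" "den (seqc C D) p = comb (den_play C i) (den_play D)" for p
    unfolding den_play_def using the_play_eq[OF dS that(1)] that(2) unfolding den_play_def by simp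
  show ?thesis
  proof (cases pC)
    case (InfPlay s)
    have s0: "s 0 = Ent i" and sE: "\<And>k. (s k, s (Suc k)) \<in> edges C"
      using pC InfPlay by (auto simp: is_play_Inf)
    have sP: "\<exists>q\<in>posns C. s (Suc k) = Pos q" for k using mid_pos[OF mC sE sE] .
    have ip: "is_play (seqc C D) i (InfPlay (\<lambda>k. inl_src (s k)))"
      unfolding is_play_Inf
    proof (intro conjI allI)
      show "inl_src (s 0) = Ent i" using s0 by simp
      fix k
      obtain q where q: "q \<in> posns C" "s (Suc k) = Pos q" using sP by blast
      show "(inl_src (s k), inl_src (s (Suc k))) \<in> edges (seqc C D)"
        using E1[OF src_of[OF mC sE] q(1)] sE[of k] q(2) by simp
    qed
    have "MP_cond (seqc C D) (\<lambda>k. inl_src (s k)) = MP_cond C s" by (simp add: MP_cond_def)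
    then have "den (seqc C D) (InfPlay (\<lambda>k. inl_src (s k))) = comb (den_play C i) (den_play D)"
      by (simp add: dpC InfPlay den_Inf comb_def)
    then show ?thesis using suff ip by blast
  next
    case (FinPlay xs)
    have X0: "xs \<noteq> []" and X1: "xs ! 0 = Ent i"
      and XE: "\<And>k. Suc k < length xs \<Longrightarrow> (xs ! k, xs ! Suc k) \<in> edges C"
      and X4: "\<nexists>t. (last xs, t) \<in> edges C"
      using pC FinPlay by (auto simp: is_play_Fin)
    have len2: "length xs \<ge> 2"
    proof (rule ccontr)
      assume "\<not> 2 \<le> length xs"
      moreover have "length xs > 0" using X0 by simp
      ultimately have "length xs = 1" by linarith
      then have "last xs = Ent i" using X1 X0 by (simp add: last_conv_nth)
      then show False using X4 ent_succ[OF mC i] by auto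
    qed
    have midC: "\<exists>q\<in>posns C. xs ! k = Pos q" if "0 < k" "Suc k < length xs" for k
    proof -
      have e1: "(xs ! (k - 1), xs ! k) \<in> edges C" using XE[of "k - 1"] that by simp
      have e2: "(xs ! k, xs ! Suc k) \<in> edges C" using XE[of k] that by simp
      show ?thesis using mid_pos[OF mC e1 e2] .
    qed
    have srcC: "xs ! k \<in> sources C" if "Suc k < length xs" for k
      using src_of[OF mC XE[OF that]] .
    have lastX: "last xs = xs ! Suc (length xs - 2)"
    proof -
      have e: "Suc (length xs - 2) = length xs - 1" using len2 by arith
      show ?thesis unfolding e using X0 by (simp add: last_conv_nth)
    qed
    have lastE: "(xs ! (length xs - 2), last xs) \<in> edges C" using XE[of "length xs - 2"] len2 lastX by simp
    from tgt_cases[OF mC lastE] show ?thesis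
    proof (elim disjE bexE)
      fix q assume q: "q \<in> posns C" "last xs = Pos q"
      define zs :: "('a + 'b) node list" where "zs = map inl_src xs"
      have ip: "is_play (seqc C D) i (FinPlay zs)"
        unfolding is_play_Fin
      proof (intro conjI allI impI)
        show "zs \<noteq> []" using X0 by (simp add: zs_def)
        show "zs ! 0 = Ent i" using X0 X1 by (simp add: zs_def)
        fix k assume k: "Suc k < length zs"
        then have k': "Suc k < length xs" by (simp add: zs_def)
        have "\<exists>q\<in>posns C. xs ! Suc k = Pos q"
        proof (cases "Suc (Suc k) < length xs")
          case True then show ?thesis using midC by simp
        next
          case False then have "Suc k = length xs - 1" using k' by simp
          then show ?thesis using q X0 by (simp add: last_conv_nth)
        qed
        then obtain q' where q': "q' \<in> posns C" "xs ! Suc k = Pos q'" by blast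
        show "(zs ! k, zs ! Suc k) \<in> edges (seqc C D)"
          using E1[OF srcC[OF k'] q'(1)] XE[OF k'] q'(2) k' by (simp add: zs_def)
      next
        show "\<nexists>t. (last zs, t) \<in> edges (seqc C D)"
          using NS1[of q _ C D] X4 q X0 by (auto simp: zs_def last_map)
      qed
      have "den (seqc C D) (FinPlay zs) = (case roles C q of RForall \<Rightarrow> EStar | RExists \<Rightarrow> AStar)"
        using den_Fin_Pos[of zs "Inl q"] X0 q by (simp add: zs_def last_map)
      moreover have "den_play C i = (case roles C q of RForall \<Rightarrow> EStar | RExists \<Rightarrow> AStar)"
        using den_Fin_Pos[of xs q C] X0 q dpC FinPlay by simp
      ultimately have "den (seqc C D) (FinPlay zs) = comb (den_play C i) (den_play D)"
        by (simp add: comb_def split: role.splits)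
      then show ?thesis using suff ip by blast
    next
      fix j assume j: "j \<in> {1..l}" "last xs = Exit j"
      define c where "c = length xs - 2"
      have Lc: "length xs = Suc (Suc c)" using len2 by (simp add: c_def)
      have xsc: "xs ! Suc c = Exit j" using lastX j by (simp add: c_def)
      define r where "r = (\<Sum>k=1..c. node_wt C (xs!k))"
      have dCi: "den_play C i = (if c = 0 then Ret j else WRet r j)"
        using den_Fin_Exit[OF X0 j(2), of C] dpC FinPlay Lc by (simp add: r_def)
      have jD: "j \<in> {1..n_in D}" using j nD by simp
      have jC: "j \<in> {1..n_out C}" using j nC by simp
      have cE: "(xs ! c, Exit j) \<in> edges C" using XE[of c] Lc xsc by simp
      have srcc: "xs ! c \<in> sources C" using srcC Lc by simp
      have midC': "\<exists>q\<in>posns C. xs ! Suc k = Pos q" if "k < c" for k using midC[of "Suc k"] that Lc by simp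
      obtain pD where pD: "is_play D j pD" using play_exists by blast
      have dpD: "den_play D j = den D pD" unfolding den_play_def using the_play_eq[OF dD pD] by simp
      show ?thesis
      proof (cases pD)
        case (InfPlay t)
        have t0: "t 0 = Ent j" and tE: "\<And>k. (t k, t (Suc k)) \<in> edges D"
          using pD InfPlay by (auto simp: is_play_Inf)
        have tP: "\<exists>q\<in>posns D. t (Suc k) = Pos q" for k using mid_pos[OF mD tE tE] .
        define u :: "nat \<Rightarrow> ('a + 'b) node" where "u k = (if k \<le> c then inl_src (xs!k) else inr_tgt (t (k - c)))" for k
        have ip: "is_play (seqc C D) i (InfPlay u)"
          unfolding is_play_Inf
        proof (intro conjI allI)
          show "u 0 = Ent i" using X1 by (simp add: u_def)
          fix k
          consider "k < c" | "k = c" | "k > c" by linarith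
          then show "(u k, u (Suc k)) \<in> edges (seqc C D)"
          proof cases
            case 1
            obtain q where q: "q \<in> posns C" "xs ! Suc k = Pos q" using midC'[OF 1] by blast
            have sk: "Suc k < length xs" using 1 Lc by simp
            show ?thesis using E1[OF srcC[OF sk] q(1), of D] XE[OF sk] q(2) 1 by (simp add: u_def)
          next
            case 2
            have "(t 0, t 1) \<in> edges D" using tE[of 0] by simp
            then have "(inl_src (xs ! c), inr_tgt (t 1)) \<in> edges (seqc C D)"
              using E3[OF srcc tgt_of[OF mD tE[of 0]] jC cE] t0 by simp
            then show ?thesis using 2 by (simp add: u_def)
          next
            case 3
            have kk: "Suc (k - c - 1) = k - c" using 3 by simp
            obtain q where q: "q \<in> posns D" "t (k - c) = Pos q" using tP[of "k - c - 1"] unfolding kk by blast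
            have e: "(t (k - c), t (Suc (k - c))) \<in> edges D" by (rule tE)
            have "(Pos (Inr q), inr_tgt (t (Suc (k - c)))) \<in> edges (seqc C D)"
              using E2[OF q(1) tgt_of[OF mD e]] e q(2) by simp
            then show ?thesis using 3 q(2) by (simp add: u_def Suc_diff_le)
          qed
        qed
        define B where "B = (\<Sum>q\<in>posns D. \<bar>wt D q\<bar>)"
        have finD: "finite (posns D)" using mD unfolding roMPG_def by auto
        have bnd: "\<forall>k. \<bar>node_wt D (t k)\<bar> \<le> B"
        proof
          fix k show "\<bar>node_wt D (t k)\<bar> \<le> B"
          proof (cases k)
            case 0 then show ?thesis using t0 by (simp add: B_def sum_nonneg)
          next
            case (Suc k')
            obtain q where q: "q \<in> posns D" "t k = Pos q" using tP[of k'] Suc by blast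
            show ?thesis using q member_le_sum[of q "posns D" "\<lambda>q. \<bar>wt D q\<bar>"] finD by (simp add: B_def)
          qed
        qed
        have ab: "\<forall>k\<ge>1. node_wt (seqc C D) (u (c + k)) = node_wt D (t k)"
          by (simp add: u_def)
        have "MP_cond (seqc C D) u = MP_cond D t"
          unfolding MP_cond_def by (rule mp_shift[OF ab bnd])
        then have "den (seqc C D) (InfPlay u) = den_play D j"
          by (simp add: den_Inf dpD InfPlay)
        then have "den (seqc C D) (InfPlay u) = comb (den_play C i) (den_play D)"
          by (simp add: dCi comb_def dpD InfPlay den_Inf)
        then show ?thesis using suff ip by blast
      next
        case (FinPlay ys)
        have Y0: "ys \<noteq> []" and Y1: "ys ! 0 = Ent j"
          and YE: "\<And>k. Suc k < length ys \<Longrightarrow> (ys ! k, ys ! Suc k) \<in> edges D"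
          and Y4: "\<nexists>t. (last ys, t) \<in> edges D"
          using pD FinPlay by (auto simp: is_play_Fin)
        have leny: "length ys \<ge> 2"
        proof (rule ccontr)
          assume "\<not> 2 \<le> length ys"
          moreover have "length ys > 0" using Y0 by simp
          ultimately have "length ys = 1" by linarith
          then have "last ys = Ent j" using Y1 Y0 by (simp add: last_conv_nth)
          then show False using Y4 ent_succ[OF mD j(1)] by auto
        qed
        define N where "N = length ys - 1"
        have LN: "length ys = Suc N" "N \<ge> 1" using leny by (auto simp: N_def)
        have midD: "\<exists>q\<in>posns D. ys ! k = Pos q" if "0 < k" "Suc k < length ys" for k
        proof -
          have e1: "(ys ! (k - 1), ys ! k) \<in> edges D" using YE[of "k - 1"] that by simp
          have e2: "(ys ! k, ys ! Suc k) \<in> edges D" using YE[of k] that by simp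
          show ?thesis using mid_pos[OF mD e1 e2] .
        qed
        have lastY: "last ys = ys ! N" using Y0 by (simp add: last_conv_nth N_def)
        have lastYE: "(ys ! (N - 1), last ys) \<in> edges D" using YE[of "N - 1"] LN lastY by simp
        define v :: "nat \<Rightarrow> ('a + 'b) node" where "v k = (if k \<le> c then inl_src (xs!k) else inr_tgt (ys ! (k - c)))" for k
        define zs where "zs = map v [0..<Suc (c + N)]"
        have lz: "length zs = Suc (c + N)" by (simp add: zs_def)
        have zn: "zs ! k = v k" if "k < Suc (c + N)" for k using that by (simp add: zs_def del: upt_Suc)
        have lastz: "last zs = inr_tgt (last ys)"
          using zn[of "c + N"] lz LN lastY by (simp add: last_conv_nth v_def zs_def del: upt_Suc)
        have ip: "is_play (seqc C D) i (FinPlay zs)"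
          unfolding is_play_Fin
        proof (intro conjI allI impI)
          show "zs \<noteq> []" by (simp add: zs_def del: upt_Suc)
          show "zs ! 0 = Ent i" using zn[of 0] X1 by (simp add: v_def)
          fix k assume k: "Suc k < length zs"
          then have zk: "zs ! k = v k" "zs ! Suc k = v (Suc k)" using zn lz by auto
          consider "k < c" | "k = c" | "k > c" by linarith
          then show "(zs ! k, zs ! Suc k) \<in> edges (seqc C D)"
          proof cases
            case 1
            obtain q where q: "q \<in> posns C" "xs ! Suc k = Pos q" using midC'[OF 1] by blast
            have sk: "Suc k < length xs" using 1 Lc by simp
            show ?thesis using E1[OF srcC[OF sk] q(1), of D] XE[OF sk] q(2) 1 zk by (simp add: v_def)
          next
            case 2
            have "(ys ! 0, ys ! 1) \<in> edges D" using YE[of 0] leny by simp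
            then have "(inl_src (xs ! c), inr_tgt (ys ! 1)) \<in> edges (seqc C D)"
              using E3[OF srcc tgt_of[OF mD] jC cE] Y1 by simp
            then show ?thesis using 2 zk by (simp add: v_def)
          next
            case 3
            have kc: "Suc (k - c) < length ys" using k lz LN 3 by simp
            obtain q where q: "q \<in> posns D" "ys ! (k - c) = Pos q" using midD[of "k - c"] 3 kc by auto
            have e: "(ys ! (k - c), ys ! Suc (k - c)) \<in> edges D" by (rule YE[OF kc])
            have "(Pos (Inr q), inr_tgt (ys ! Suc (k - c))) \<in> edges (seqc C D)"
              using E2[OF q(1) tgt_of[OF mD e]] e q(2) by simp
            then show ?thesis using 3 q(2) zk by (simp add: v_def Suc_diff_le)
          qed
        next
          show "\<nexists>t. (last zs, t) \<in> edges (seqc C D)"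
          proof
            assume "\<exists>t. (last zs, t) \<in> edges (seqc C D)"
            then obtain t where t: "(inr_tgt (last ys), t) \<in> edges (seqc C D)" using lastz by auto
            from tgt_cases[OF mD lastYE] show False
            proof (elim disjE bexE)
              fix q assume "q \<in> posns D" "last ys = Pos q"
              then show False using NS2[of q t C D] t Y4 by auto
            next
              fix k assume "k \<in> {1..n}" "last ys = Exit k"
              then show False using NS3[of k t C D] t by auto
            qed
          qed
        qed
        have sumz: "(\<Sum>k=1..c + (N - 1). node_wt (seqc C D) (zs ! k))
            = r + (\<Sum>k=1..N - 1. node_wt D (ys ! k))"
        proof -
          have "(\<Sum>k=1..c + (N - 1). node_wt (seqc C D) (zs ! k))
             = (\<Sum>k=1..c. node_wt (seqc C D) (zs ! k)) + (\<Sum>k=1..N - 1. node_wt D (ys ! k))"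
            by (rule sum_shift) (auto simp: zn v_def)
          moreover have "(\<Sum>k=1..c. node_wt (seqc C D) (zs ! k)) = r"
            unfolding r_def by (rule sum.cong) (auto simp: zn v_def)
          ultimately show ?thesis by simp
        qed
        from tgt_cases[OF mD lastYE] show ?thesis
        proof (elim disjE bexE)
          fix q assume q: "q \<in> posns D" "last ys = Pos q"
          have "den (seqc C D) (FinPlay zs) = (case roles D q of RForall \<Rightarrow> EStar | RExists \<Rightarrow> AStar)"
            using den_Fin_Pos[of zs "Inr q"] q lastz lz by (auto simp: zs_def del: upt_Suc)
          moreover have "den_play D j = (case roles D q of RForall \<Rightarrow> EStar | RExists \<Rightarrow> AStar)"
            using den_Fin_Pos[of ys q D] Y0 q dpD FinPlay by simp
          ultimately have "den (seqc C D) (FinPlay zs) = comb (den_play C i) (den_play D)"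
            by (simp add: dCi comb_def split: role.splits)
          then show ?thesis using suff ip by blast
        next
          fix k assume k: "k \<in> {1..n}" "last ys = Exit k"
          have z0: "zs \<noteq> []" using lz by auto
          have dz: "den (seqc C D) (FinPlay zs) = (if c + N = 1 then Ret k
              else WRet (r + (\<Sum>k=1..N - 1. node_wt D (ys ! k))) k)"
          proof -
            have lz1: "c + N - 1 = c + (N - 1)" using LN(2) by simp
            have lz2: "length zs - 1 = c + N" using lz by simp
            show ?thesis using den_Fin_Exit[OF z0, of k "seqc C D"] lastz k(2)
              unfolding lz2 unfolding lz1 sumz by simp
          qed
          have dy: "den_play D j = (if N = 1 then Ret k
              else WRet (\<Sum>k=1..N - 1. node_wt D (ys ! k)) k)"
            using den_Fin_Exit[OF Y0 k(2), of D] dpD FinPlay LN by simp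
          have "den (seqc C D) (FinPlay zs) = comb (den_play C i) (den_play D)"
            using dz dy dCi LN(2) by (auto simp: comb_def r_def)
          then show ?thesis using suff ip by blast
        qed
      qed
    qed
  qed
qed

theorem proposition3p2:
  fixes C :: "'a ropmg" and D :: "'b ropmg" and m l n i :: nat
  assumes "roPG C m l" and "roPG D l n" and "i \<in> {1..m}"
  shows "den_play (seqc C D) i =
    (case den_play C i of
       EStar \<Rightarrow> EStar
     | AStar \<Rightarrow> AStar
     | Ret j \<Rightarrow> den_play D j
     | WRet r j \<Rightarrow>
         (case den_play D j of
            EStar \<Rightarrow> EStar
          | AStar \<Rightarrow> AStar
          | Ret k \<Rightarrow> WRet r k
          | WRet r' k \<Rightarrow> WRet (r + r') k))"
  using main[OF assms] unfolding comb_def .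

end
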